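(* Let $\alpha=(i_1^{\alpha_1},i_2^{\alpha_2},\ldots,i_m^{\alpha_m})$ be a partition of $n$ (the $i_j$ distinct part sizes, $\alpha_j$ their multiplicities). Then $$\mathbf{K}_{\alpha}=\mathbf{C}_{i_1}(X^{\alpha_1})\cdot\mathbf{C}_{i_2}(X^{\alpha_2})\cdots\mathbf{C}_{i_m}(X^{\alpha_m}),$$ where $\mathbf{C}_{i}(X^{a})$ denotes the composition $\mathbf{C}_{(i)}\circ X^{a}$.
   Context: Species are functors from finite sets with bijections to finite sets; equality means natural isomorphism. For $H\le S_n$, $X^n/H$ is the species with $(X^n/H)[U]=\{\lambda H:\lambda:[n]\to U\text{ bijection}\}$ ($\lambda H=\{\lambda\circ f:f\in H\}$), transport $(X^n/H)[\tau](\lambda H)=(\tau\lambda)H$. For a partition $\beta$ of $N$, $\sigma_\beta$ is the standard permutation filling cycles of lengths $\beta_1,\beta_2,\ldots$ with $1,\ldots,N$ in increasing order, and $\mathbf{C}_\beta:=X^N/\langle\sigma_\beta\rangle$. For $\alpha=(i_1^{\alpha_1},\ldots,i_m^{\alpha_m})$, $\mathbf{K}_\alpha$ is defined as the species product $\mathbf{C}_{i_m^{\alpha_m}}\cdot\mathbf{C}_{i_{m-1}^{\alpha_{m-1}}}\cdots\mathbf{C}_{i_1^{\alpha_1}}$, equivalently $X^n/G_\alpha$ with $G_\alpha$ the direct product of the cyclic groups generated by the standard permutations of shapes $i_j^{\alpha_j}$ acting on consecutive disjoint blocks of $[n]$. The product of species is $(F\cdot G)[U]=\bigsqcup_{U=U_1\sqcup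 U_2}F[U_1]\times G[U_2]$. $X^a$ is the species of lists of length $a$, and $(F\circ G)[U]=\bigsqcup_\pi F[\pi]\times\prod_{B\in\pi}G[B]$ over set partitions $\pi$ of $U$. *)

theory Defs
  imports Main "HOL-Library.Disjoint_Sets" "HOL-Library.FuncSet"
begin

text \<open>A species with labels of type 'a and structures of type 's:
  struct U is the set of F-structures on the finite label set U,
  transp tau s is the transport of s along a bijection tau : U -> V.\<close>
record ('a, 's) species =
  struct :: "'a set \<Rightarrow> 's set"
  transp :: "('a \<Rightarrow> 'a) \<Rightarrow> 's \<Rightarrow> 's"

text \<open>Equality of species = natural isomorphism.\<close>
definition species_iso :: "('a, 's) species \<Rightarrow> ('a, 't) species \<Rightarrow> bool" where
  "species_iso F G \<longleftrightarrow>
     (\<exists>\<phi> :: 'a set \<Rightarrow> 's \<Rightarrow> 't.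
        (\<forall>U. finite U \<longrightarrow> bij_betw (\<phi> U) (struct F U) (struct G U)) \<and>
        (\<forall>U V \<tau> s. finite U \<longrightarrow> bij_betw \<tau> U V \<longrightarrow> s \<in> struct F U \<longrightarrow>
            \<phi> V (transp F \<tau> s) = transp G \<tau> (\<phi> U s)))"

text \<open>A bijection lambda : [n] -> U is a distinct list of length n with set U
  (0-based positions). For a set H of permutations of {..<n}, lambda H is the coset.\<close>
definition coset_list :: "nat \<Rightarrow> (nat \<Rightarrow> nat) set \<Rightarrow> 'a list \<Rightarrow> 'a list set" where
  "coset_list n H xs = {map (\<lambda>i. xs ! f i) [0..<n] | f. f \<in> H}"

definition quot_sp :: "nat \<Rightarrow> (nat \<Rightarrow> nat) set \<Rightarrow> ('a, 'a list set) species" where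
  "quot_sp n H = \<lparr> struct = (\<lambda>U. {coset_list n H xs | xs. distinct xs \<and> length xs = n \<and> set xs = U}),
                  transp = (\<lambda>\<tau> s. map \<tau> ` s) \<rparr>"

definition Xpow :: "nat \<Rightarrow> ('a, 'a list) species" where
  "Xpow a = \<lparr> struct = (\<lambda>U. {xs. distinct xs \<and> length xs = a \<and> set xs = U}),
              transp = (\<lambda>\<tau> xs. map \<tau> xs) \<rparr>"

text \<open>Standard permutation of shape beta (0-based): cycles of lengths beta_1, beta_2, ...
  filled with consecutive numbers in increasing order; identity outside {..<sum beta}.\<close>
fun std_perm :: "nat list \<Rightarrow> nat \<Rightarrow> nat" where
  "std_perm [] j = j"
| "std_perm (b # bs) j =
     (if j < b then (if Suc j = b then 0 else Suc j) else b + std_perm bs (j - b))"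

definition cyc_group :: "(nat \<Rightarrow> nat) \<Rightarrow> (nat \<Rightarrow> nat) set" where
  "cyc_group \<sigma> = range (\<lambda>k. \<sigma> ^^ k)"

definition C_sp :: "nat list \<Rightarrow> ('a, 'a list set) species" where
  "C_sp \<beta> = quot_sp (sum_list \<beta>) (cyc_group (std_perm \<beta>))"

definition prod_sp :: "('a, 's) species list \<Rightarrow> ('a, ('a set \<times> 's) list) species" where
  "prod_sp Fs = \<lparr> struct = (\<lambda>U. {ps. length ps = length Fs \<and>
        (\<forall>j<length Fs. snd (ps ! j) \<in> struct (Fs ! j) (fst (ps ! j))) \<and>
        disjoint_family_on (\<lambda>j. fst (ps ! j)) {..<length Fs} \<and>
        (\<Union>j<length Fs. fst (ps ! j)) = U}),
     transp = (\<lambda>\<tau> ps. map (\<lambda>j. (\<tau> ` fst (ps ! j), transp (Fs ! j) \<tau> (snd (ps ! j)))) [0..<length ps]) \<rparr>"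

definition comp_sp :: "('a set, 's) species \<Rightarrow> ('a, 't) species
    \<Rightarrow> ('a, 'a set set \<times> 's \<times> ('a set \<Rightarrow> 't)) species" where
  "comp_sp F G = \<lparr> struct = (\<lambda>U. {(\<pi>, f, g) | \<pi> f g. partition_on U \<pi> \<and> f \<in> struct F \<pi> \<and>
                                  g \<in> (\<Pi>\<^sub>E B\<in>\<pi>. struct G B)}),
     transp = (\<lambda>\<tau> (\<pi>, f, g). ((`) \<tau> ` \<pi>, transp F ((`) \<tau>) f,
                 (\<lambda>B'\<in>(`) \<tau> ` \<pi>. transp G \<tau> (g (the_inv_into \<pi> ((`) \<tau>) B'))))) \<rparr>"

text \<open>A partition alpha = (i_1^alpha_1, ..., i_m^alpha_m) is given as the list of pairs
  (i_j, alpha_j). K_alpha = C_{i_m^alpha_m} \<cdot> ... \<cdot> C_{i_1^alpha_1}.\<close>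
definition K_sp :: "(nat \<times> nat) list \<Rightarrow> ('a, ('a set \<times> 'a list set) list) species" where
  "K_sp ps = prod_sp (rev (map (\<lambda>(i, a). C_sp (replicate a i)) ps))"

end

theory Submission
  imports Defs
begin

definition shf :: "nat \<Rightarrow> nat \<Rightarrow> nat \<Rightarrow> nat" where
  "shf i k t = t div i * i + (t mod i + k) mod i"

lemma shf_lt: "0 < i \<Longrightarrow> t < a * i \<Longrightarrow> shf i k t < a * i"
proof -
  assume i: "0 < i" and t: "t < a * i"
  have "t div i < a" using t i by (simp add: div_less_iff_less_mult mult.commute)
  hence "t div i + 1 \<le> a" by simp
  hence "(t div i + 1) * i \<le> a * i" by (rule mult_right_mono) simp
  moreover have "(t mod i + k) mod i < i" using i by simp
  ultimately show ?thesis unfolding shf_def by (simp add: algebra_simps)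
qed

lemma std_perm_rep: "0 < i \<Longrightarrow> t < a * i \<Longrightarrow> std_perm (replicate a i) t = shf i 1 t"
proof (induction a arbitrary: t)
  case 0 then show ?case by simp
next
  case (Suc a)
  show ?case
  proof (cases "t < i")
    case True
    then show ?thesis using Suc.prems unfolding shf_def
      by (auto simp: mod_Suc)
  next
    case False
    then obtain x where x: "t = i + x" by (metis le_add_diff_inverse not_less)
    then have "x < a * i" using Suc.prems by simp
    then have "std_perm (replicate a i) x = shf i 1 x" using Suc.IH Suc.prems(1) by blast
    moreover have "(i + x) div i = Suc (x div i)" using Suc.prems(1) by (simp add: div_add_self1)
    ultimately show ?thesis using x Suc.prems(1) unfolding shf_def by simp
  qed
qed

lemma shf_shf: "0 < i \<Longrightarrow> shf i k (shf i m t) = shf i (m + k) t"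
  unfolding shf_def by (simp add: mod_add_left_eq add.assoc)

lemma shf_0: "shf i 0 t = t"
  unfolding shf_def by simp

lemma std_perm_pow: "0 < i \<Longrightarrow> t < a * i \<Longrightarrow> (std_perm (replicate a i) ^^ k) t = shf i k t"
proof (induction k)
  case 0 then show ?case by (simp add: shf_0)
next
  case (Suc k)
  have "(std_perm (replicate a i) ^^ Suc k) t = std_perm (replicate a i) (shf i k t)"
    using Suc by simp
  also have "\<dots> = shf i 1 (shf i k t)" using std_perm_rep shf_lt Suc.prems by blast
  also have "\<dots> = shf i (Suc k) t" using shf_shf Suc.prems by simp
  finally show ?case .
qed

definition shl :: "nat \<Rightarrow> nat \<Rightarrow> nat \<Rightarrow> 'a list \<Rightarrow> 'a list" where
  "shl i a k xs = map (\<lambda>t. xs ! shf i k t) [0..<a*i]"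

lemma coset_C: "0 < i \<Longrightarrow>
  coset_list (a*i) (cyc_group (std_perm (replicate a i))) xs = {shl i a k xs | k. True}"
proof -
  assume i: "0 < i"
  have "map (\<lambda>t. xs ! (std_perm (replicate a i) ^^ k) t) [0..<a*i] = shl i a k xs" for k
    unfolding shl_def using std_perm_pow[OF i] by (intro map_cong) auto
  then show ?thesis unfolding coset_list_def cyc_group_def by (auto, metis rangeI)
qed

lemma bounded_C: "0 < i \<Longrightarrow> \<forall>t<a*i. \<forall>h\<in>cyc_group (std_perm (replicate a i)). h t < a*i"
  unfolding cyc_group_def by (auto simp: std_perm_pow shf_lt)

lemma coset_map:
  assumes "\<forall>t<n. \<forall>h\<in>H. h t < n" "length xs = n"
  shows "map \<tau> ` coset_list n H xs = coset_list n H (map \<tau> xs)"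
proof -
  have "map \<tau> (map (\<lambda>i. xs ! f i) [0..<n]) = map (\<lambda>i. map \<tau> xs ! f i) [0..<n]" if "f \<in> H" for f
    using assms that by auto
  then show ?thesis unfolding coset_list_def image_def by auto
qed

lemma quot_iso:
  fixes \<psi> :: "'a list \<Rightarrow> 't" and G :: "('a, 't) species"
  assumes bnd: "\<forall>t<n. \<forall>h\<in>H. h t < n"
  and A: "\<And>xs. distinct xs \<Longrightarrow> length xs = n \<Longrightarrow> \<psi> xs \<in> struct G (set xs)"
  and B: "\<And>xs ys. distinct xs \<Longrightarrow> length xs = n \<Longrightarrow> distinct ys \<Longrightarrow> length ys = n \<Longrightarrow> set xs = set ys \<Longrightarrow>
            (\<psi> xs = \<psi> ys \<longleftrightarrow> coset_list n H xs = coset_list n H ys)"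
  and C: "\<And>U s. finite U \<Longrightarrow> s \<in> struct G U \<Longrightarrow> \<exists>xs. distinct xs \<and> length xs = n \<and> set xs = U \<and> \<psi> xs = s"
  and D: "\<And>xs \<tau>. distinct xs \<Longrightarrow> length xs = n \<Longrightarrow> inj_on \<tau> (set xs) \<Longrightarrow> \<psi> (map \<tau> xs) = transp G \<tau> (\<psi> xs)"
  shows "species_iso (quot_sp n H) G"
proof -
  define \<phi> where "\<phi> U S = \<psi> (SOME xs. distinct xs \<and> length xs = n \<and> set xs = U \<and> S = coset_list n H xs)" for U S
  have key: "\<phi> U (coset_list n H xs) = \<psi> xs" if "distinct xs" "length xs = n" "set xs = U" for U xs
  proof -
    let ?P = "\<lambda>ys. distinct ys \<and> length ys = n \<and> set ys = U \<and> coset_list n H xs = coset_list n H ys"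
    have "?P xs" using that by simp
    hence "?P (SOME ys. ?P ys)" by (rule someI)
    hence "\<psi> (SOME ys. ?P ys) = \<psi> xs" using B[of "SOME ys. ?P ys" xs] that by simp
    thus ?thesis unfolding \<phi>_def by simp
  qed
  have S: "struct (quot_sp n H) U = {coset_list n H xs | xs. distinct xs \<and> length xs = n \<and> set xs = U}" for U
    by (simp add: quot_sp_def)
  show ?thesis unfolding species_iso_def
  proof (intro exI conjI allI impI)
    fix U :: "'a set" assume fin: "finite U"
    show "bij_betw (\<phi> U) (struct (quot_sp n H) U) (struct G U)"
      unfolding bij_betw_def
    proof (intro conjI)
      show "inj_on (\<phi> U) (struct (quot_sp n H) U)"
      proof (rule inj_onI)
        fix S1 S2 assume "S1 \<in> struct (quot_sp n H) U" "S2 \<in> struct (quot_sp n H) U" "\<phi> U S1 = \<phi> U S2"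
        then obtain xs ys where xs: "distinct xs" "length xs = n" "set xs = U" "S1 = coset_list n H xs"
          and ys: "distinct ys" "length ys = n" "set ys = U" "S2 = coset_list n H ys"
          and eq: "\<phi> U S1 = \<phi> U S2" unfolding S by blast
        have "\<psi> xs = \<psi> ys" using eq key[OF xs(1-3)] key[OF ys(1-3)] xs(4) ys(4) by simp
        then show "S1 = S2" using B[OF xs(1,2) ys(1,2)] xs(3,4) ys(3,4) by simp
      qed
      show "\<phi> U ` struct (quot_sp n H) U = struct G U"
      proof
        show "\<phi> U ` struct (quot_sp n H) U \<subseteq> struct G U"
        proof
          fix s assume "s \<in> \<phi> U ` struct (quot_sp n H) U"
          then obtain xs where xs: "distinct xs" "length xs = n" "set xs = U" "s = \<phi> U (coset_list n H xs)"
            unfolding S by blast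
          then show "s \<in> struct G U" using key[OF xs(1-3)] A[OF xs(1,2)] xs(3) by simp
        qed
        show "struct G U \<subseteq> \<phi> U ` struct (quot_sp n H) U"
        proof
          fix s assume "s \<in> struct G U"
          then obtain xs where xs: "distinct xs" "length xs = n" "set xs = U" "\<psi> xs = s" using C fin by blast
          then show "s \<in> \<phi> U ` struct (quot_sp n H) U" unfolding S using key
            by (metis (mono_tags, lifting) image_eqI mem_Collect_eq)
        qed
      qed
    qed
  next
    fix U V s and \<tau> :: "'a \<Rightarrow> 'a" assume fin: "finite U" and bij: "bij_betw \<tau> U V" and s: "s \<in> struct (quot_sp n H) U"
    then obtain xs where xs: "distinct xs" "length xs = n" "set xs = U" "s = coset_list n H xs" unfolding S by blast
    have tr: "transp (quot_sp n H) \<tau> s = coset_list n H (map \<tau> xs)"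
      using coset_map[OF bnd xs(2)] xs(4) by (simp add: quot_sp_def)
    have inj: "inj_on \<tau> (set xs)" using bij xs(3) bij_betw_def by blast
    have "distinct (map \<tau> xs)" using xs(1) inj by (simp add: distinct_map)
    moreover have "set (map \<tau> xs) = V" using bij xs(3) by (simp add: bij_betw_def)
    ultimately have "\<phi> V (transp (quot_sp n H) \<tau> s) = \<psi> (map \<tau> xs)" using tr key xs(2) by simp
    also have "\<dots> = transp G \<tau> (\<psi> xs)" using D xs inj by blast
    also have "\<dots> = transp G \<tau> (\<phi> U s)" using key xs by simp
    finally show "\<phi> V (transp (quot_sp n H) \<tau> s) = transp G \<tau> (\<phi> U s)" .
  qed
qed

lemma iso_trans:
  fixes F :: "('a, 's) species" and G :: "('a, 't) species" and K :: "('a, 'u) species"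
  assumes "species_iso F G" "species_iso G K"
  shows "species_iso F K"
proof -
  obtain \<phi> where p1: "\<forall>U. finite U \<longrightarrow> bij_betw (\<phi> U) (struct F U) (struct G U)"
    and p2: "\<forall>U V \<tau> s. finite U \<longrightarrow> bij_betw \<tau> U V \<longrightarrow> s \<in> struct F U \<longrightarrow>
            \<phi> V (transp F \<tau> s) = transp G \<tau> (\<phi> U s)"
    using assms(1) unfolding species_iso_def by (elim exE conjE) (rule that)
  obtain \<chi> where q1: "\<forall>U. finite U \<longrightarrow> bij_betw (\<chi> U) (struct G U) (struct K U)"
    and q2: "\<forall>U V \<tau> s. finite U \<longrightarrow> bij_betw \<tau> U V \<longrightarrow> s \<in> struct G U \<longrightarrow>
            \<chi> V (transp G \<tau> s) = transp K \<tau> (\<chi> U s)"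
    using assms(2) unfolding species_iso_def by (elim exE conjE) (rule that)
  show ?thesis unfolding species_iso_def
  proof (intro exI[of _ "\<lambda>U s. \<chi> U (\<phi> U s)"] conjI allI impI)
    fix U :: "'a set" assume "finite U"
    then have "bij_betw (\<phi> U) (struct F U) (struct G U)" "bij_betw (\<chi> U) (struct G U) (struct K U)"
      using p1 q1 by simp_all
    from bij_betw_trans[OF this]
    show "bij_betw (\<lambda>s. \<chi> U (\<phi> U s)) (struct F U) (struct K U)" by (simp add: comp_def)
  next
    fix U V :: "'a set" and \<tau> :: "'a \<Rightarrow> 'a" and s assume a: "finite U" "bij_betw \<tau> U V" "s \<in> struct F U"
    have "bij_betw (\<phi> U) (struct F U) (struct G U)" using p1 a(1) by simp
    then have "\<phi> U s \<in> struct G U" by (rule bij_betw_apply[OF _ a(3)])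
    have "\<phi> V (transp F \<tau> s) = transp G \<tau> (\<phi> U s)" by (rule p2[rule_format, OF a])
    moreover have "\<chi> V (transp G \<tau> (\<phi> U s)) = transp K \<tau> (\<chi> U (\<phi> U s))"
      by (rule q2[rule_format, OF a(1,2) \<open>\<phi> U s \<in> struct G U\<close>])
    ultimately show "\<chi> V (\<phi> V (transp F \<tau> s)) = transp K \<tau> (\<chi> U (\<phi> U s))" by simp
  qed
qed

lemma prod_struct:
  "ps \<in> struct (prod_sp Fs) U \<longleftrightarrow> length ps = length Fs \<and>
        (\<forall>j<length Fs. snd (ps ! j) \<in> struct (Fs ! j) (fst (ps ! j))) \<and>
        disjoint_family_on (\<lambda>j. fst (ps ! j)) {..<length Fs} \<and>
        (\<Union>j<length Fs. fst (ps ! j)) = U"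
  by (simp add: prod_sp_def)

lemma prod_transp:
  "transp (prod_sp Fs) \<tau> ps = map (\<lambda>j. (\<tau> ` fst (ps ! j), transp (Fs ! j) \<tau> (snd (ps ! j)))) [0..<length ps]"
  by (simp add: prod_sp_def)

lemma disj_rev:
  "disjoint_family_on (\<lambda>j. A (n - Suc j)) {..<n} \<longleftrightarrow> disjoint_family_on A {..<n}"
  unfolding disjoint_family_on_def
proof
  assume h: "\<forall>m\<in>{..<n}. \<forall>k\<in>{..<n}. m \<noteq> k \<longrightarrow> A (n - Suc m) \<inter> A (n - Suc k) = {}"
  show "\<forall>m\<in>{..<n}. \<forall>k\<in>{..<n}. m \<noteq> k \<longrightarrow> A m \<inter> A k = {}"
  proof (intro ballI impI)
    fix x y assume "x \<in> {..<n}" "y \<in> {..<n}" "x \<noteq> y"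
    then show "A x \<inter> A y = {}" using h[rule_format, of "n - Suc x" "n - Suc y"] by auto
  qed
next
  assume h: "\<forall>m\<in>{..<n}. \<forall>k\<in>{..<n}. m \<noteq> k \<longrightarrow> A m \<inter> A k = {}"
  show "\<forall>m\<in>{..<n}. \<forall>k\<in>{..<n}. m \<noteq> k \<longrightarrow> A (n - Suc m) \<inter> A (n - Suc k) = {}"
  proof (intro ballI impI)
    fix x y assume "x \<in> {..<n}" "y \<in> {..<n}" "x \<noteq> y"
    then show "A (n - Suc x) \<inter> A (n - Suc y) = {}" using h[rule_format, of "n - Suc x" "n - Suc y"] by auto
  qed
qed

lemma union_rev:
  "(\<Union>j<n. A (n - Suc j)) = (\<Union>j<n. A j)"
proof -
  have "(\<lambda>j. n - Suc j) ` {..<n} = {..<n}"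
  proof
    show "{..<n} \<subseteq> (\<lambda>j. n - Suc j) ` {..<n}"
    proof
      fix x assume "x \<in> {..<n}" then show "x \<in> (\<lambda>j. n - Suc j) ` {..<n}"
        by (intro image_eqI[of _ _ "n - Suc x"]) auto
    qed
  qed auto
  have "(\<lambda>j. A (n - Suc j)) ` {..<n} = A ` ((\<lambda>j. n - Suc j) ` {..<n})" by (simp add: image_image)
  also have "\<dots> = A ` {..<n}" using \<open>(\<lambda>j. n - Suc j) ` {..<n} = {..<n}\<close> by simp
  finally show ?thesis by simp
qed

lemma disj_cong: "(\<And>j. j \<in> S \<Longrightarrow> A j = B j) \<Longrightarrow> disjoint_family_on A S = disjoint_family_on B S"
  unfolding disjoint_family_on_def by (metis (no_types))

lemma rev_struct:
  "ps \<in> struct (prod_sp (rev Fs)) U \<longleftrightarrow> rev ps \<in> struct (prod_sp Fs) U"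
proof (cases "length ps = length Fs")
  case False then show ?thesis unfolding prod_struct by simp
next
  case True
  {
    assume "length ps = length Fs"
    have
      "(\<forall>j<length Fs. snd (ps ! j) \<in> struct (rev Fs ! j) (fst (ps ! j))) \<longleftrightarrow>
       (\<forall>j<length Fs. snd (rev ps ! j) \<in> struct (Fs ! j) (fst (rev ps ! j)))"
    proof
      assume h: "\<forall>j<length Fs. snd (ps ! j) \<in> struct (rev Fs ! j) (fst (ps ! j))"
      show "\<forall>j<length Fs. snd (rev ps ! j) \<in> struct (Fs ! j) (fst (rev ps ! j))"
      proof (intro allI impI)
        fix j assume j: "j < length Fs"
        have "length Fs - Suc j < length Fs" using j by simp
        then have "snd (ps ! (length Fs - Suc j)) \<in> struct (rev Fs ! (length Fs - Suc j)) (fst (ps ! (length Fs - Suc j)))"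
          using h by blast
        then show "snd (rev ps ! j) \<in> struct (Fs ! j) (fst (rev ps ! j))"
          using j \<open>length ps = length Fs\<close> by (simp add: rev_nth Suc_diff_Suc)
      qed
    next
      assume h: "\<forall>j<length Fs. snd (rev ps ! j) \<in> struct (Fs ! j) (fst (rev ps ! j))"
      show "\<forall>j<length Fs. snd (ps ! j) \<in> struct (rev Fs ! j) (fst (ps ! j))"
      proof (intro allI impI)
        fix j assume j: "j < length Fs"
        have "length Fs - Suc j < length Fs" using j by simp
        then have "snd (rev ps ! (length Fs - Suc j)) \<in> struct (Fs ! (length Fs - Suc j)) (fst (rev ps ! (length Fs - Suc j)))"
          using h by blast
        then show "snd (ps ! j) \<in> struct (rev Fs ! j) (fst (ps ! j))"
          using j \<open>length ps = length Fs\<close> by (simp add: rev_nth Suc_diff_Suc)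
      qed
    qed
    moreover have "disjoint_family_on (\<lambda>j. fst (ps ! j)) {..<length Fs} \<longleftrightarrow>
        disjoint_family_on (\<lambda>j. fst (rev ps ! j)) {..<length Fs}"
      using disj_rev[of "\<lambda>j. fst (ps ! j)" "length Fs"] \<open>length ps = length Fs\<close>
      using \<open>length ps = length Fs\<close> by (subst disj_cong[of _ _ "\<lambda>j. fst (ps ! (length Fs - Suc j))"]) (auto simp: rev_nth)
    moreover have "(\<Union>j<length Fs. fst (ps ! j)) = (\<Union>j<length Fs. fst (rev ps ! j))"
      using union_rev[of "\<lambda>j. fst (ps ! j)" "length Fs"] \<open>length ps = length Fs\<close>
      by (simp add: rev_nth)
    ultimately have ?thesis unfolding prod_struct by simp
  }
  then show ?thesis using True by blast
qed

lemma rev_iso: "species_iso (prod_sp (rev Fs)) (prod_sp Fs)"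
  unfolding species_iso_def
proof (intro exI[of _ "\<lambda>U. rev"] conjI allI impI)
  fix U :: "'a set"
  show "bij_betw rev (struct (prod_sp (rev Fs)) U) (struct (prod_sp Fs) U)"
    unfolding bij_betw_def
  proof
    show "inj_on rev (struct (prod_sp (rev Fs)) U)" by (simp add: inj_on_def)
    show "rev ` struct (prod_sp (rev Fs)) U = struct (prod_sp Fs) U"
    proof
      show "rev ` struct (prod_sp (rev Fs)) U \<subseteq> struct (prod_sp Fs) U" using rev_struct by blast
      show "struct (prod_sp Fs) U \<subseteq> rev ` struct (prod_sp (rev Fs)) U"
      proof
        fix x assume "x \<in> struct (prod_sp Fs) U"
        then have "rev x \<in> struct (prod_sp (rev Fs)) U" using rev_struct[of "rev x"] by simp
        then show "x \<in> rev ` struct (prod_sp (rev Fs)) U" by (metis image_eqI rev_rev_ident)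
      qed
    qed
  qed
next
  fix U V \<tau> ps assume "ps \<in> struct (prod_sp (rev Fs)) U"
  then have l: "length ps = length Fs" unfolding prod_struct by simp
  show "rev (transp (prod_sp (rev Fs)) \<tau> ps) = transp (prod_sp Fs) \<tau> (rev ps)"
    unfolding prod_transp using l by (intro nth_equalityI) (auto simp: rev_nth)
qed

lemma prod_iso:
  fixes Fs :: "('a, 's) species list" and Gs :: "('a, 't) species list"
  assumes len: "length Fs = length Gs" and iso: "\<forall>j<length Fs. species_iso (Fs ! j) (Gs ! j)"
  shows "species_iso (prod_sp Fs) (prod_sp Gs)"
proof -
  let ?Q = "\<lambda>j (\<phi> :: 'a set \<Rightarrow> 's \<Rightarrow> 't). j < length Fs \<longrightarrow>
     (\<forall>U. finite U \<longrightarrow> bij_betw (\<phi> U) (struct (Fs ! j) U) (struct (Gs ! j) U)) \<and>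
     (\<forall>U V (\<tau> :: 'a \<Rightarrow> 'a) s. finite U \<longrightarrow> bij_betw \<tau> U V \<longrightarrow> s \<in> struct (Fs ! j) U \<longrightarrow>
            \<phi> V (transp (Fs ! j) \<tau> s) = transp (Gs ! j) \<tau> (\<phi> U s))"
  have "\<forall>j. \<exists>\<phi>. ?Q j \<phi>"
  proof
    fix j show "\<exists>\<phi>. ?Q j \<phi>"
    proof (cases "j < length Fs")
      case True
      then have "species_iso (Fs ! j) (Gs ! j)" using iso by simp
      then show ?thesis unfolding species_iso_def using True by (elim exE) (rule exI, rule impI, assumption)
    qed simp
  qed
  then obtain \<Phi> where "\<forall>j. ?Q j (\<Phi> j)" by (rule choice[THEN exE])
  then have \<Phi>1: "\<And>j U. j < length Fs \<Longrightarrow> finite U \<Longrightarrow> bij_betw (\<Phi> j U) (struct (Fs ! j) U) (struct (Gs ! j) U)"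
    and \<Phi>2: "\<And>j U V \<tau> s. j < length Fs \<Longrightarrow> finite U \<Longrightarrow> bij_betw \<tau> U V \<Longrightarrow> s \<in> struct (Fs ! j) U \<Longrightarrow>
            \<Phi> j V (transp (Fs ! j) \<tau> s) = transp (Gs ! j) \<tau> (\<Phi> j U s)"
    by simp_all
  define \<phi> where "\<phi> U ps = map (\<lambda>j. (fst (ps ! j), \<Phi> j (fst (ps ! j)) (snd (ps ! j)))) [0..<length ps]"
    for U :: "'a set" and ps :: "('a set \<times> 's) list"
  have sub: "fst (ps ! j) \<subseteq> U" if "ps \<in> struct (prod_sp Fs) U" "j < length Fs" for ps U j
    using that unfolding prod_struct by blast
  have into: "\<phi> U ps \<in> struct (prod_sp Gs) U" if fin: "finite U" and ps: "ps \<in> struct (prod_sp Fs) U" for U ps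
  proof -
    have l: "length ps = length Fs" using ps unfolding prod_struct by simp
    have "snd (\<phi> U ps ! j) \<in> struct (Gs ! j) (fst (\<phi> U ps ! j))" if j: "j < length Gs" for j
    proof -
      have j': "j < length Fs" using j len by simp
      have f1: "finite (fst (ps ! j))" using sub[OF ps j'] fin finite_subset by blast
      have f2: "snd (ps ! j) \<in> struct (Fs ! j) (fst (ps ! j))" using ps j' unfolding prod_struct by blast
      have "\<Phi> j (fst (ps ! j)) (snd (ps ! j)) \<in> struct (Gs ! j) (fst (ps ! j))"
        by (rule bij_betw_apply[OF \<Phi>1[OF j' f1] f2])
      then show ?thesis using j' l unfolding \<phi>_def by simp
    qed
    moreover have "disjoint_family_on (\<lambda>j. fst (\<phi> U ps ! j)) {..<length Gs}"
      using ps l len unfolding prod_struct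
      by (subst disj_cong[of _ _ "\<lambda>j. fst (ps ! j)"]) (auto simp: \<phi>_def)
    moreover have "(\<Union>j<length Gs. fst (\<phi> U ps ! j)) = U"
      using ps l len unfolding prod_struct \<phi>_def by simp
    ultimately show ?thesis unfolding prod_struct using l len by (simp add: \<phi>_def)
  qed
  show ?thesis unfolding species_iso_def
  proof (intro exI[of _ \<phi>] conjI allI impI)
    fix U :: "'a set" assume fin: "finite U"
    show "bij_betw (\<phi> U) (struct (prod_sp Fs) U) (struct (prod_sp Gs) U)"
      unfolding bij_betw_def
    proof (intro conjI)
      show "inj_on (\<phi> U) (struct (prod_sp Fs) U)"
      proof (rule inj_onI)
        fix ps qs assume ps: "ps \<in> struct (prod_sp Fs) U" and qs: "qs \<in> struct (prod_sp Fs) U"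
          and eq: "\<phi> U ps = \<phi> U qs"
        have lp: "length ps = length Fs" using ps unfolding prod_struct by simp
        have lq: "length qs = length Fs" using qs unfolding prod_struct by simp
        show "ps = qs"
        proof (rule nth_equalityI)
          show "length ps = length qs" using lp lq by simp
          fix j assume "j < length ps"
          then have j: "j < length Fs" using lp by simp
          have e: "(fst (ps ! j), \<Phi> j (fst (ps ! j)) (snd (ps ! j))) = (fst (qs ! j), \<Phi> j (fst (qs ! j)) (snd (qs ! j)))"
          proof -
            have "\<phi> U ps ! j = \<phi> U qs ! j" using eq by simp
            moreover have "\<phi> U ps ! j = (fst (ps ! j), \<Phi> j (fst (ps ! j)) (snd (ps ! j)))" using j lp by (simp add: \<phi>_def)
            moreover have "\<phi> U qs ! j = (fst (qs ! j), \<Phi> j (fst (qs ! j)) (snd (qs ! j)))" using j lq by (simp add: \<phi>_def)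
            ultimately show ?thesis by metis
          qed
          then have f: "fst (ps ! j) = fst (qs ! j)" by simp
          from e have g: "\<Phi> j (fst (ps ! j)) (snd (ps ! j)) = \<Phi> j (fst (ps ! j)) (snd (qs ! j))" by auto
          have "finite (fst (ps ! j))" using sub[OF ps j] fin finite_subset by blast
          then have "inj_on (\<Phi> j (fst (ps ! j))) (struct (Fs ! j) (fst (ps ! j)))"
            by (rule bij_betw_imp_inj_on[OF \<Phi>1[OF j]])
          moreover have "snd (ps ! j) \<in> struct (Fs ! j) (fst (ps ! j))" using ps j unfolding prod_struct by blast
          moreover have "snd (qs ! j) \<in> struct (Fs ! j) (fst (ps ! j))" using qs j f unfolding prod_struct by metis
          ultimately have "snd (ps ! j) = snd (qs ! j)" using g by (simp add: inj_on_def)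
          then show "ps ! j = qs ! j" using f by (simp add: prod_eq_iff)
        qed
      qed
      show "\<phi> U ` struct (prod_sp Fs) U = struct (prod_sp Gs) U"
      proof
        show "\<phi> U ` struct (prod_sp Fs) U \<subseteq> struct (prod_sp Gs) U" using into fin by blast
        show "struct (prod_sp Gs) U \<subseteq> \<phi> U ` struct (prod_sp Fs) U"
        proof
          fix qs assume qs: "qs \<in> struct (prod_sp Gs) U"
          have lq: "length qs = length Fs" using qs len unfolding prod_struct by simp
          define ps where "ps = map (\<lambda>j. (fst (qs ! j), the_inv_into (struct (Fs ! j) (fst (qs ! j))) (\<Phi> j (fst (qs ! j))) (snd (qs ! j)))) [0..<length qs]"
          have bj: "bij_betw (\<Phi> j (fst (qs ! j))) (struct (Fs ! j) (fst (qs ! j))) (struct (Gs ! j) (fst (qs ! j)))"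
            if j: "j < length Fs" for j
          proof -
            have jg: "j < length Gs" using j len by simp
            have "fst (qs ! j) \<subseteq> (\<Union>j<length Gs. fst (qs ! j))" using jg by blast
            also have "\<dots> = U" using qs unfolding prod_struct by simp
            finally have "fst (qs ! j) \<subseteq> U" .
            then have "finite (fst (qs ! j))" using fin finite_subset by blast
            then show ?thesis by (rule \<Phi>1[OF j])
          qed
          have sq: "snd (qs ! j) \<in> struct (Gs ! j) (fst (qs ! j))" if "j < length Fs" for j
            using qs that len unfolding prod_struct by simp
          have "ps \<in> struct (prod_sp Fs) U"
          proof -
            have "snd (ps ! j) \<in> struct (Fs ! j) (fst (ps ! j))" if j: "j < length Fs" for j
              using bij_betw_apply[OF bij_betw_the_inv_into[OF bj[OF j]] sq[OF j]] j lq
              unfolding ps_def by simp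
            moreover have "disjoint_family_on (\<lambda>j. fst (ps ! j)) {..<length Fs}"
              using qs lq len unfolding prod_struct
              by (subst disj_cong[of _ _ "\<lambda>j. fst (qs ! j)"]) (auto simp: ps_def)
            moreover have "(\<Union>j<length Fs. fst (ps ! j)) = U"
              using qs lq len unfolding prod_struct ps_def by simp
            ultimately show ?thesis unfolding prod_struct using lq by (simp add: ps_def)
          qed
          moreover have "\<phi> U ps = qs"
          proof (rule nth_equalityI)
            show "length (\<phi> U ps) = length qs" by (simp add: \<phi>_def ps_def)
            fix j assume "j < length (\<phi> U ps)"
            then have j: "j < length Fs" using lq by (simp add: \<phi>_def ps_def)
            show "\<phi> U ps ! j = qs ! j"
              using f_the_inv_into_f_bij_betw[OF bj[OF j] sq[OF j]] j lq
              by (simp add: \<phi>_def ps_def prod_eq_iff)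
          qed
          ultimately show "qs \<in> \<phi> U ` struct (prod_sp Fs) U" by blast
        qed
      qed
    qed
  next
    fix U V :: "'a set" and \<tau> :: "'a \<Rightarrow> 'a" and ps
    assume fin: "finite U" and bij: "bij_betw \<tau> U V" and ps: "ps \<in> struct (prod_sp Fs) U"
    have l: "length ps = length Fs" using ps unfolding prod_struct by simp
    show "\<phi> V (transp (prod_sp Fs) \<tau> ps) = transp (prod_sp Gs) \<tau> (\<phi> U ps)"
    proof (rule nth_equalityI)
      show "length (\<phi> V (transp (prod_sp Fs) \<tau> ps)) = length (transp (prod_sp Gs) \<tau> (\<phi> U ps))"
        by (simp add: \<phi>_def prod_transp)
      fix j assume "j < length (\<phi> V (transp (prod_sp Fs) \<tau> ps))"
      then have j: "j < length Fs" using l by (simp add: \<phi>_def prod_transp)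
      have s: "fst (ps ! j) \<subseteq> U" using sub[OF ps j] .
      then have fj: "finite (fst (ps ! j))" using fin finite_subset by blast
      have bj: "bij_betw \<tau> (fst (ps ! j)) (\<tau> ` fst (ps ! j))" using bij_betw_subset[OF bij s] by simp
      have sj: "snd (ps ! j) \<in> struct (Fs ! j) (fst (ps ! j))" using ps j unfolding prod_struct by blast
      have "\<Phi> j (\<tau> ` fst (ps ! j)) (transp (Fs ! j) \<tau> (snd (ps ! j))) = transp (Gs ! j) \<tau> (\<Phi> j (fst (ps ! j)) (snd (ps ! j)))"
        by (rule \<Phi>2[OF j fj bj sj])
      then show "\<phi> V (transp (prod_sp Fs) \<tau> ps) ! j = transp (prod_sp Gs) \<tau> (\<phi> U ps) ! j"
        using j l len by (simp add: \<phi>_def prod_transp)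
    qed
  qed
qed

definition cols :: "nat \<Rightarrow> nat \<Rightarrow> 'a list \<Rightarrow> nat \<Rightarrow> 'a list" where
  "cols i a xs t = map (\<lambda>j. xs ! (j * i + t)) [0..<a]"

definition CL :: "nat \<Rightarrow> nat \<Rightarrow> 'a list \<Rightarrow> 'a list list" where
  "CL i a xs = map (cols i a xs) [0..<i]"

definition ilv :: "nat \<Rightarrow> nat \<Rightarrow> 'a list list \<Rightarrow> 'a list" where
  "ilv i a L = map (\<lambda>p. L ! (p mod i) ! (p div i)) [0..<a * i]"

definition good :: "nat \<Rightarrow> nat \<Rightarrow> 'a list list \<Rightarrow> bool" where
  "good i a L \<longleftrightarrow> length L = i \<and> (\<forall>t<i. distinct (L ! t) \<and> length (L ! t) = a) \<and>
     (\<forall>t<i. \<forall>t'<i. t \<noteq> t' \<longrightarrow> set (L ! t) \<inter> set (L ! t') = {})"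

lemma idx_lt: "j < a \<Longrightarrow> t < i \<Longrightarrow> j * i + t < a * (i::nat)"
proof -
  assume "j < a" "t < i"
  then have "Suc j \<le> a" by simp
  then have "Suc j * i \<le> a * i" by (rule mult_right_mono) simp
  then show ?thesis using \<open>t < i\<close> by simp
qed

lemma idx_div: "t < i \<Longrightarrow> (j * i + t) div i = (j::nat)" by simp
lemma idx_mod: "t < i \<Longrightarrow> (j * i + t) mod i = (t::nat)" by simp

lemma idx_decomp: "0 < i \<Longrightarrow> p < a * i \<Longrightarrow> p div i < a \<and> p mod i < i \<and> p = p div i * i + p mod (i::nat)"
  by (simp add: div_less_iff_less_mult mult.commute)

lemma CL_length[simp]: "length (CL i a xs) = i" by (simp add: CL_def)
lemma CL_nth: "t < i \<Longrightarrow> CL i a xs ! t = cols i a xs t" by (simp add: CL_def)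
lemma cols_length[simp]: "length (cols i a xs t) = a" by (simp add: cols_def)
lemma cols_nth: "j < a \<Longrightarrow> cols i a xs t ! j = xs ! (j * i + t)" by (simp add: cols_def)

lemma CL_good:
  assumes i: "0 < i" and d: "distinct xs" and l: "length xs = a * i"
  shows "good i a (CL i a xs)"
  unfolding good_def
proof (intro conjI allI impI)
  show "length (CL i a xs) = i" by simp
  fix t assume t: "t < i"
  show "length (CL i a xs ! t) = a" using t by (simp add: CL_nth)
  show "distinct (CL i a xs ! t)"
    unfolding CL_nth[OF t] distinct_conv_nth
  proof (intro allI impI)
    fix j j' assume "j < length (cols i a xs t)" "j' < length (cols i a xs t)" "j \<noteq> j'"
    then have jj: "j < a" "j' < a" "j \<noteq> j'" by simp_all
    have "j * i + t \<noteq> j' * i + t" using jj(3) i by simp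
    then show "cols i a xs t ! j \<noteq> cols i a xs t ! j'"
      using jj idx_lt[OF jj(1) t] idx_lt[OF jj(2) t] d l by (simp add: cols_nth nth_eq_iff_index_eq)
  qed
next
  fix t t' assume t: "t < i" and t': "t' < i" and ne: "t \<noteq> t'"
  show "set (CL i a xs ! t) \<inter> set (CL i a xs ! t') = {}"
  proof (rule ccontr)
    assume "set (CL i a xs ! t) \<inter> set (CL i a xs ! t') \<noteq> {}"
    then obtain j j' where jj: "j < a" "j' < a" "xs ! (j * i + t) = xs ! (j' * i + t')"
      unfolding CL_nth[OF t] CL_nth[OF t'] by (auto simp: cols_def)
    then have "j * i + t = j' * i + t'" using idx_lt[OF jj(1) t] idx_lt[OF jj(2) t'] d l
      by (simp add: nth_eq_iff_index_eq)
    then have "(j * i + t) mod i = (j' * i + t') mod i" by simp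
    then show False using t t' ne by simp
  qed
qed

lemma CL_union:
  assumes i: "0 < i" and l: "length xs = a * i"
  shows "\<Union> (set ` set (CL i a xs)) = set xs"
proof
  show "\<Union> (set ` set (CL i a xs)) \<subseteq> set xs"
    using l idx_lt by (auto simp: CL_def cols_def)
  show "set xs \<subseteq> \<Union> (set ` set (CL i a xs))"
  proof
    fix x assume "x \<in> set xs"
    then obtain p where p: "p < a * i" "xs ! p = x" using l by (auto simp: in_set_conv_nth)
    from idx_decomp[OF i p(1)] have d: "p div i < a" "p mod i < i" "p = p div i * i + p mod i" by auto
    have "x = cols i a xs (p mod i) ! (p div i)" using d p cols_nth by metis
    then have "x \<in> set (cols i a xs (p mod i))" using d by simp
    moreover have "cols i a xs (p mod i) \<in> set (CL i a xs)" using d by (simp add: CL_def)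
    ultimately show "x \<in> \<Union> (set ` set (CL i a xs))" by blast
  qed
qed

lemma CL_inj:
  assumes i: "0 < i" and l: "length xs = a * i" "length ys = a * i" and e: "CL i a xs = CL i a ys"
  shows "xs = ys"
proof (rule nth_equalityI)
  show "length xs = length ys" using l by simp
  fix p assume "p < length xs"
  then have p: "p < a * i" using l by simp
  from idx_decomp[OF i p] have d: "p div i < a" "p mod i < i" "p = p div i * i + p mod i" by auto
  have "cols i a xs (p mod i) ! (p div i) = cols i a ys (p mod i) ! (p div i)"
    using e d CL_nth by metis
  then show "xs ! p = ys ! p" using d by (metis cols_nth)
qed

lemma CL_ilv:
  assumes i: "0 < i" and L: "length L = i" and La: "\<forall>t<i. length (L ! t) = a"
  shows "CL i a (ilv i a L) = L"
proof (rule nth_equalityI)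
  show "length (CL i a (ilv i a L)) = length L" using L by simp
  fix t assume "t < length (CL i a (ilv i a L))"
  then have t: "t < i" by simp
  show "CL i a (ilv i a L) ! t = L ! t"
  proof (rule nth_equalityI)
    show "length (CL i a (ilv i a L) ! t) = length (L ! t)" using t La by (simp add: CL_nth)
    fix j assume "j < length (CL i a (ilv i a L) ! t)"
    then have j: "j < a" using t by (simp add: CL_nth)
    show "CL i a (ilv i a L) ! t ! j = L ! t ! j"
      using idx_lt[OF j t] t j by (simp add: CL_nth cols_nth ilv_def)
  qed
qed

lemma good_set_inj:
  assumes g: "good i a L" and a: "0 < a" and t: "t < i" "t' < i" and e: "set (L ! t) = set (L ! t')"
  shows "t = t'"
proof (rule ccontr)
  assume ne: "t \<noteq> t'"
  have "set (L ! t) \<inter> set (L ! t') = {}" using g t ne unfolding good_def by blast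
  moreover have "L ! t \<noteq> []" using g t a unfolding good_def by auto
  ultimately show False using e by auto
qed

lemma good_distinct_sets:
  assumes g: "good i a L" and a: "0 < a"
  shows "distinct (map set L)"
proof -
  have l: "length L = i" using g unfolding good_def by simp
  show ?thesis unfolding distinct_conv_nth
    using good_set_inj[OF g a] l by auto
qed

lemma the_col:
  assumes g: "good i a L" and a: "0 < a" and t: "t < i"
  shows "(THE l. l \<in> set L \<and> set l = set (L ! t)) = L ! t"
proof (rule the_equality)
  have l: "length L = i" using g unfolding good_def by simp
  show "L ! t \<in> set L \<and> set (L ! t) = set (L ! t)" using t l by simp
  fix l assume h: "l \<in> set L \<and> set l = set (L ! t)"
  then obtain t' where t': "t' < i" "l = L ! t'" using l by (auto simp: in_set_conv_nth)
  then have "t' = t" using good_set_inj[OF g a t'(1) t] h by simp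
  then show "l = L ! t" using t' by simp
qed

lemma ilv_length[simp]: "length (ilv i a L) = a * i" by (simp add: ilv_def)

lemma ilv_distinct:
  assumes g: "good i a L" and i: "0 < i"
  shows "distinct (ilv i a L)"
  unfolding distinct_conv_nth
proof (intro allI impI)
  fix p q assume "p < length (ilv i a L)" "q < length (ilv i a L)" and pq: "p \<noteq> q"
  then have p: "p < a * i" and q: "q < a * i" by simp_all
  from idx_decomp[OF i p] have dp: "p div i < a" "p mod i < i" "p = p div i * i + p mod i" by auto
  from idx_decomp[OF i q] have dq: "q div i < a" "q mod i < i" "q = q div i * i + q mod i" by auto
  have l: "length L = i" and la: "\<forall>t<i. distinct (L ! t) \<and> length (L ! t) = a"
    and dj: "\<forall>t<i. \<forall>t'<i. t \<noteq> t' \<longrightarrow> set (L ! t) \<inter> set (L ! t') = {}"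
    using g unfolding good_def by auto
  have ep: "ilv i a L ! p = L ! (p mod i) ! (p div i)" using p by (simp add: ilv_def)
  have eq: "ilv i a L ! q = L ! (q mod i) ! (q div i)" using q by (simp add: ilv_def)
  show "ilv i a L ! p \<noteq> ilv i a L ! q"
  proof (cases "p mod i = q mod i")
    case True
    then have "p div i \<noteq> q div i" using pq dp(3) dq(3) by metis
    moreover have "distinct (L ! (p mod i))" "length (L ! (p mod i)) = a" using la dp(2) by auto
    ultimately show ?thesis using ep eq True dp(1) dq(1) by (simp add: nth_eq_iff_index_eq)
  next
    case False
    have "L ! (p mod i) ! (p div i) \<in> set (L ! (p mod i))" using la dp by simp
    moreover have "L ! (q mod i) ! (q div i) \<in> set (L ! (q mod i))" using la dq by simp
    moreover have "set (L ! (p mod i)) \<inter> set (L ! (q mod i)) = {}" using dj dp(2) dq(2) False by blast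
    ultimately show ?thesis using ep eq by auto
  qed
qed

lemma ilv_set:
  assumes g: "good i a L" and i: "0 < i"
  shows "set (ilv i a L) = \<Union> (set ` set L)"
proof -
  have "length L = i" "\<forall>t<i. length (L ! t) = a" using g unfolding good_def by auto
  then have "CL i a (ilv i a L) = L" using CL_ilv[OF i] by blast
  then show ?thesis using CL_union[OF i ilv_length[of i a L]] by simp
qed

definition Psi :: "nat \<Rightarrow> 'a list list \<Rightarrow> 'a set set \<times> 'a set list set \<times> ('a set \<Rightarrow> 'a list)" where
  "Psi i L = (set ` set L, coset_list i (cyc_group (std_perm [i])) (map set L),
              restrict (\<lambda>B. THE l. l \<in> set L \<and> set l = B) (set ` set L))"

lemma comp_struct:
  "(p, f, g) \<in> struct (comp_sp F G) U \<longleftrightarrow> partition_on U p \<and> f \<in> struct F p \<and> g \<in> (\<Pi>\<^sub>E B\<in>p. struct G B)"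
  by (simp add: comp_sp_def)

lemma C1_struct:
  "struct (C_sp [i]) P = {coset_list i (cyc_group (std_perm [i])) bs | bs. distinct bs \<and> length bs = i \<and> set bs = P}"
  by (simp add: C_sp_def quot_sp_def)

lemma Xpow_struct: "struct (Xpow a) B = {xs. distinct xs \<and> length xs = a \<and> set xs = B}"
  by (simp add: Xpow_def)

lemma Psi_struct:
  assumes g: "good i a L" and a: "0 < a"
  shows "Psi i L \<in> struct (comp_sp (C_sp [i]) (Xpow a)) (\<Union> (set ` set L))"
proof -
  have l: "length L = i" and la: "\<forall>t<i. distinct (L ! t) \<and> length (L ! t) = a"
    and dj: "\<forall>t<i. \<forall>t'<i. t \<noteq> t' \<longrightarrow> set (L ! t) \<inter> set (L ! t') = {}"
    using g unfolding good_def by auto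
  have "partition_on (\<Union> (set ` set L)) (set ` set L)"
    unfolding partition_on_def
  proof (intro conjI)
    show "\<Union> (set ` set L) = \<Union> (set ` set L)" ..
    show "disjoint (set ` set L)"
    proof (rule disjointI)
      fix A B assume "A \<in> set ` set L" "B \<in> set ` set L" "A \<noteq> B"
      then obtain la lb where "la \<in> set L" "lb \<in> set L" "A = set la" "B = set lb" by blast
      then obtain t t' where "t < i" "t' < i" "A = set (L ! t)" "B = set (L ! t')"
        using l by (metis in_set_conv_nth)
      moreover from this have "t \<noteq> t'" using \<open>A \<noteq> B\<close> by auto
      ultimately show "A \<inter> B = {}" using dj by blast
    qed
    show "{} \<notin> set ` set L"
    proof
      assume "{} \<in> set ` set L"
      then obtain t where "t < i" "set (L ! t) = {}" using l by (auto simp: in_set_conv_nth)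
      then show False using la a by auto
    qed
  qed
  moreover have "coset_list i (cyc_group (std_perm [i])) (map set L) \<in> struct (C_sp [i]) (set ` set L)"
    unfolding C1_struct using good_distinct_sets[OF g a] l by auto
  moreover have "restrict (\<lambda>B. THE l. l \<in> set L \<and> set l = B) (set ` set L) \<in> (\<Pi>\<^sub>E B\<in>set ` set L. struct (Xpow a) B)"
  proof (rule restrict_PiE_iff[THEN iffD2], intro ballI)
    fix B assume "B \<in> set ` set L"
    then obtain t where t: "t < i" "B = set (L ! t)" using l by (auto simp: in_set_conv_nth)
    then show "(THE l. l \<in> set L \<and> set l = B) \<in> struct (Xpow a) B"
      using the_col[OF g a t(1)] la unfolding Xpow_struct by simp
  qed
  ultimately show ?thesis unfolding Psi_def comp_struct by blast
qed

definition rotl :: "nat \<Rightarrow> nat \<Rightarrow> 'b list \<Rightarrow> 'b list" where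
  "rotl i k L = map (\<lambda>t. L ! ((t + k) mod i)) [0..<i]"

lemma shl_length[simp]: "length (shl i a k xs) = a * i" by (simp add: shl_def)

lemma shl_shl: "0 < i \<Longrightarrow> shl i a m (shl i a k xs) = shl i a (m + k) xs"
  by (intro nth_equalityI) (auto simp: shl_def shf_lt shf_shf)

lemma shl_0: "length xs = a * i \<Longrightarrow> shl i a 0 xs = xs"
  by (intro nth_equalityI) (auto simp: shl_def shf_0)

lemma shf_mod: "shf i (m + i * k) t = shf i m t"
  unfolding shf_def by (simp add: add.assoc[symmetric])

lemma shl_mod: "shl i a (m + i * k) xs = shl i a m xs"
  unfolding shl_def by (simp add: shf_mod)

lemma CS:
  assumes i: "0 < i" and l: "length xs = a * i"
  shows "coset_list (a*i) (cyc_group (std_perm (replicate a i))) (shl i a k xs) =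
         coset_list (a*i) (cyc_group (std_perm (replicate a i))) xs"
  unfolding coset_C[OF i]
proof (intro set_eqI iffI)
  fix z assume "z \<in> {shl i a m (shl i a k xs) |m. True}"
  then obtain m where "z = shl i a m (shl i a k xs)" by blast
  then have "z = shl i a (m + k) xs" using shl_shl[OF i] by simp
  then show "z \<in> {shl i a m xs |m. True}" by blast
next
  fix z assume "z \<in> {shl i a m xs |m. True}"
  then obtain m where z: "z = shl i a m xs" by blast
  have "k \<le> i * k" using i by simp
  then have "m + i * k = (m + i * k - k) + k" by linarith
  then have "z = shl i a ((m + i * k - k) + k) xs" using z shl_mod by metis
  also have "\<dots> = shl i a (m + i * k - k) (shl i a k xs)" by (rule shl_shl[OF i, symmetric])
  finally show "z \<in> {shl i a m (shl i a k xs) |m. True}" by blast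
qed

lemma shf_small: "t < i \<Longrightarrow> shf i k t = (t + k) mod i"
  unfolding shf_def by simp

lemma shl1: "shl i 1 k l = rotl i k l"
  unfolding shl_def rotl_def by (intro nth_equalityI) (auto simp: shf_small)

lemma shl1': "shl i (Suc 0) k l = rotl i k l" using shl1[of i k l] by simp

lemma coset1: "0 < i \<Longrightarrow> coset_list i (cyc_group (std_perm [i])) l = {rotl i k l | k. True}"
  using coset_C[of i 1 l] by (simp add: shl1')

lemma rotl_length[simp]: "length (rotl i k L) = i" by (simp add: rotl_def)

lemma rotl_0: "length L = i \<Longrightarrow> rotl i 0 L = L"
  unfolding rotl_def by (intro nth_equalityI) auto

lemma coset1_rot:
  assumes i: "0 < i" and l: "length L = i"
  shows "coset_list i (cyc_group (std_perm [i])) (rotl i k L) = coset_list i (cyc_group (std_perm [i])) L"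
proof -
  have "length L = 1 * i" using l by simp
  from CS[OF i this, of k] show ?thesis by (simp add: shl1')
qed

lemma set_rotl:
  assumes i: "0 < i" and l: "length L = i"
  shows "set (rotl i k L) = set L"
proof
  show "set (rotl i k L) \<subseteq> set L" using l i by (auto simp: rotl_def)
  show "set L \<subseteq> set (rotl i k L)"
  proof
    fix x assume "x \<in> set L"
    then obtain s where s: "s < i" "L ! s = x" using l by (auto simp: in_set_conv_nth)
    define t where "t = (s + (i * k - k)) mod i"
    have "k \<le> i * k" using i by simp
    have "(t + k) mod i = (s + (i * k - k) + k) mod i" unfolding t_def by (rule mod_add_left_eq)
    also have "s + (i * k - k) + k = s + i * k" using \<open>k \<le> i * k\<close> by linarith
    then have "(s + (i * k - k) + k) mod i = (s + i * k) mod i" by (simp only:)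
    also have "\<dots> = s" using s by simp
    finally have tk: "(t + k) mod i = s" .
    have "t < i" using i unfolding t_def by simp
    then have "rotl i k L ! t = x" using s tk unfolding rotl_def by simp
    then show "x \<in> set (rotl i k L)" using \<open>t < i\<close> by (metis rotl_length nth_mem)
  qed
qed

lemma Psi_rot:
  assumes i: "0 < i" and l: "length L = i"
  shows "Psi i (rotl i k L) = Psi i L"
proof -
  have "map set (rotl i k L) = rotl i k (map set L)" using l by (simp add: rotl_def)
  moreover have "length (map set L) = i" using l by simp
  ultimately show ?thesis unfolding Psi_def using set_rotl[OF i l] coset1_rot[OF i, of "map set L" k] by simp
qed

lemma CL_shl:
  assumes i: "0 < i" and l: "length xs = a * i"
  shows "CL i a (shl i a k xs) = rotl i k (CL i a xs)"
proof (rule nth_equalityI)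
  show "length (CL i a (shl i a k xs)) = length (rotl i k (CL i a xs))" by simp
  fix t assume "t < length (CL i a (shl i a k xs))"
  then have t: "t < i" by simp
  show "CL i a (shl i a k xs) ! t = rotl i k (CL i a xs) ! t"
  proof (rule nth_equalityI)
    show "length (CL i a (shl i a k xs) ! t) = length (rotl i k (CL i a xs) ! t)"
      using t i by (simp add: CL_nth rotl_def)
    fix j assume "j < length (CL i a (shl i a k xs) ! t)"
    then have j: "j < a" using t by (simp add: CL_nth)
    have "shf i k (j * i + t) = j * i + (t + k) mod i" unfolding shf_def using t by simp
    then show "CL i a (shl i a k xs) ! t ! j = rotl i k (CL i a xs) ! t ! j"
      using t j i idx_lt[OF j t] by (simp add: CL_nth rotl_def cols_nth shl_def)
  qed
qed

lemma core_B:
  assumes i: "0 < i" and a: "0 < a"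
    and xs: "distinct xs" "length xs = a * i" and ys: "distinct ys" "length ys = a * i"
  shows "Psi i (CL i a xs) = Psi i (CL i a ys) \<longleftrightarrow>
         coset_list (a*i) (cyc_group (std_perm (replicate a i))) xs = coset_list (a*i) (cyc_group (std_perm (replicate a i))) ys"
proof
  assume e: "Psi i (CL i a xs) = Psi i (CL i a ys)"
  define LX where "LX = CL i a xs"
  define LY where "LY = CL i a ys"
  have gx: "good i a LX" unfolding LX_def by (rule CL_good[OF i xs])
  have gy: "good i a LY" unfolding LY_def by (rule CL_good[OF i ys])
  have lx: "length LX = i" and ly: "length LY = i" unfolding LX_def LY_def by simp_all
  have ee: "Psi i LX = Psi i LY" using e unfolding LX_def LY_def .
  have conj: "set ` set LX = set ` set LY \<and> coset_list i (cyc_group (std_perm [i])) (map set LX) = coset_list i (cyc_group (std_perm [i])) (map set LY) \<and> restrict (\<lambda>B. THE l. l \<in> set LX \<and> set l = B) (set ` set LX) = restrict (\<lambda>B. THE l. l \<in> set LY \<and> set l = B) (set ` set LY)"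
    using ee[unfolded Psi_def prod.inject] .
  have e1: "set ` set LX = set ` set LY"
    and e2: "coset_list i (cyc_group (std_perm [i])) (map set LX) = coset_list i (cyc_group (std_perm [i])) (map set LY)"
    and e3: "restrict (\<lambda>B. THE l. l \<in> set LX \<and> set l = B) (set ` set LX) = restrict (\<lambda>B. THE l. l \<in> set LY \<and> set l = B) (set ` set LY)"
    using conj by blast+
  have "map set LY \<in> coset_list i (cyc_group (std_perm [i])) (map set LY)"
    unfolding coset1[OF i] using rotl_0[of "map set LY" i] ly by (metis (mono_tags, lifting) length_map mem_Collect_eq)
  then have "map set LY \<in> coset_list i (cyc_group (std_perm [i])) (map set LX)" using e2 by simp
  then have "map set LY \<in> {rotl i k (map set LX) | k. True}" unfolding coset1[OF i] .
  then obtain k where k: "map set LY = rotl i k (map set LX)" by blast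
  have LYk: "LY = rotl i k LX"
  proof (rule nth_equalityI)
    show "length LY = length (rotl i k LX)" using ly by simp
    fix t assume "t < length LY"
    then have t: "t < i" using ly by simp
    define s where "s = (t + k) mod i"
    have s: "s < i" using i unfolding s_def by simp
    have st: "set (LY ! t) = set (LX ! s)"
      using arg_cong[OF k, of "\<lambda>l. l ! t"] t lx ly unfolding s_def rotl_def by simp
    have B1: "set (LY ! t) \<in> set ` set LY" using t ly by simp
    have B2: "set (LY ! t) \<in> set ` set LX" using B1 e1 by simp
    have "(THE l. l \<in> set LX \<and> set l = set (LY ! t)) = (THE l. l \<in> set LY \<and> set l = set (LY ! t))"
      using fun_cong[OF e3, of "set (LY ! t)"] B1 B2 by simp
    moreover have "(THE l. l \<in> set LX \<and> set l = set (LY ! t)) = LX ! s"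
      using the_col[OF gx a s] st by simp
    moreover have "(THE l. l \<in> set LY \<and> set l = set (LY ! t)) = LY ! t"
      using the_col[OF gy a t] by simp
    ultimately have "LY ! t = LX ! s" by simp
    then show "LY ! t = rotl i k LX ! t" using t unfolding rotl_def s_def by simp
  qed
  then have "CL i a ys = CL i a (shl i a k xs)" using CL_shl[OF i xs(2)] unfolding LX_def LY_def by simp
  then have "ys = shl i a k xs" using CL_inj[OF i ys(2)] by simp
  then show "coset_list (a*i) (cyc_group (std_perm (replicate a i))) xs = coset_list (a*i) (cyc_group (std_perm (replicate a i))) ys"
    using CS[OF i xs(2)] by simp
next
  assume e: "coset_list (a*i) (cyc_group (std_perm (replicate a i))) xs = coset_list (a*i) (cyc_group (std_perm (replicate a i))) ys"
  have "ys \<in> coset_list (a*i) (cyc_group (std_perm (replicate a i))) ys"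
    unfolding coset_C[OF i] using shl_0[OF ys(2)] by (metis (mono_tags, lifting) mem_Collect_eq)
  then have "ys \<in> coset_list (a*i) (cyc_group (std_perm (replicate a i))) xs" using e by simp
  then have "ys \<in> {shl i a k xs | k. True}" unfolding coset_C[OF i] .
  then obtain k where "ys = shl i a k xs" by blast
  then have "CL i a ys = rotl i k (CL i a xs)" using CL_shl[OF i xs(2)] by simp
  then show "Psi i (CL i a xs) = Psi i (CL i a ys)" using Psi_rot[OF i, of "CL i a xs" k] by simp
qed

lemma core_C:
  assumes i: "0 < i" and a: "0 < a"
    and s: "s \<in> struct (comp_sp (C_sp [i]) (Xpow a)) U"
  shows "\<exists>xs. distinct xs \<and> length xs = a * i \<and> set xs = U \<and> Psi i (CL i a xs) = s"
proof -
  obtain P f g where s_eq: "s = (P, f, g)" by (cases s) auto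
  have pp: "partition_on U P" and ff: "f \<in> struct (C_sp [i]) P" and gg: "g \<in> (\<Pi>\<^sub>E B\<in>P. struct (Xpow a) B)"
    using s unfolding s_eq comp_struct by auto
  obtain bs where bs: "distinct bs" "length bs = i" "set bs = P" "f = coset_list i (cyc_group (std_perm [i])) bs"
    using ff unfolding C1_struct by blast
  have gB: "distinct (g B) \<and> length (g B) = a \<and> set (g B) = B" if "B \<in> P" for B
    using gg that unfolding Xpow_struct PiE_iff by blast
  define L where "L = map g bs"
  have lL: "length L = i" unfolding L_def using bs by simp
  have Lt: "L ! t = g (bs ! t)" if "t < i" for t unfolding L_def using that bs by simp
  have bP: "bs ! t \<in> P" if "t < i" for t using that bs by auto
  have good: "good i a L"
    unfolding good_def
  proof (intro conjI allI impI)
    show "length L = i" by (rule lL)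
    fix t assume t: "t < i"
    show "distinct (L ! t)" "length (L ! t) = a" using gB[OF bP[OF t]] Lt[OF t] by simp_all
  next
    fix t t' assume t: "t < i" and t': "t' < i" and ne: "t \<noteq> t'"
    have "bs ! t \<noteq> bs ! t'" using bs t t' ne by (simp add: nth_eq_iff_index_eq)
    then have "bs ! t \<inter> bs ! t' = {}" using pp bP[OF t] bP[OF t'] unfolding partition_on_def
      by (meson disjointD)
    then show "set (L ! t) \<inter> set (L ! t') = {}" using Lt t t' gB bP by simp
  qed
  have setL: "set ` set L = P"
  proof -
    have "set ` set L = (\<lambda>B. set (g B)) ` set bs" unfolding L_def by (simp add: image_image)
    also have "\<dots> = (\<lambda>B. B) ` set bs" by (rule image_cong) (simp_all add: gB bs(3))
    also have "\<dots> = P" using bs(3) by simp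
    finally show ?thesis .
  qed
  define xs where "xs = ilv i a L"
  have dx: "distinct xs" unfolding xs_def by (rule ilv_distinct[OF good i])
  have lx: "length xs = a * i" unfolding xs_def by simp
  have sx: "set xs = U" unfolding xs_def ilv_set[OF good i] setL using pp unfolding partition_on_def by simp
  have "\<forall>t<i. length (L ! t) = a" using good unfolding good_def by simp
  then have CLx: "CL i a xs = L" unfolding xs_def by (rule CL_ilv[OF i lL])
  have msL: "map set L = bs"
    unfolding L_def using gB bs(3) by (intro nth_equalityI) auto
  have rg: "restrict (\<lambda>B. THE l. l \<in> set L \<and> set l = B) (set ` set L) = g"
  proof
    fix B show "restrict (\<lambda>B. THE l. l \<in> set L \<and> set l = B) (set ` set L) B = g B"
    proof (cases "B \<in> P")
      case True
      then obtain t where t: "t < i" "B = bs ! t" using bs by (metis in_set_conv_nth)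
      have "set (L ! t) = B" using Lt[OF t(1)] gB[OF bP[OF t(1)]] t by simp
      then have "(THE l. l \<in> set L \<and> set l = B) = L ! t" using the_col[OF good a t(1)] by simp
      then show ?thesis using True setL Lt[OF t(1)] t by simp
    next
      case False
      then show ?thesis using gg setL by (simp add: PiE_def extensional_def)
    qed
  qed
  have "Psi i (CL i a xs) = s" unfolding CLx Psi_def s_eq setL[symmetric] msL rg using bs(4) setL by simp
  then show ?thesis using dx lx sx by blast
qed

lemma CL_map: "length xs = a * i \<Longrightarrow> CL i a (map f xs) = map (map f) (CL i a xs)"
  by (intro nth_equalityI) (auto simp: CL_def cols_def idx_lt)

lemma comp_transp:
  "transp (comp_sp F G) \<tau> (P, f, g) = ((`) \<tau> ` P, transp F ((`) \<tau>) f,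
      (\<lambda>B'\<in>(`) \<tau> ` P. transp G \<tau> (g (the_inv_into P ((`) \<tau>) B'))))"
  by (simp add: comp_sp_def)

lemma C_transp: "transp (C_sp b) h f = map h ` f" by (simp add: C_sp_def quot_sp_def)
lemma Xpow_transp: "transp (Xpow a) h l = map h l" by (simp add: Xpow_def)

lemma bnd1: "0 < i \<Longrightarrow> \<forall>t<i. \<forall>h\<in>cyc_group (std_perm [i]). h t < i"
  using bounded_C[of i 1] by simp

lemma core_D:
  fixes \<tau> :: "'a \<Rightarrow> 'a" and xs :: "'a list"
  assumes i: "0 < i" and a: "0 < a"
    and xs: "distinct xs" "length xs = a * i" and inj: "inj_on \<tau> (set xs)"
  shows "Psi i (CL i a (map \<tau> xs)) = transp (comp_sp (C_sp [i]) (Xpow a)) \<tau> (Psi i (CL i a xs))"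
proof -
  define L where "L = CL i a xs"
  define L' where "L' = CL i a (map \<tau> xs)"
  have L'L: "L' = map (map \<tau>) L" unfolding L_def L'_def using CL_map[OF xs(2)] .
  have g: "good i a L" unfolding L_def by (rule CL_good[OF i xs])
  have dx': "distinct (map \<tau> xs)" using xs(1) inj by (simp add: distinct_map)
  have g': "good i a L'" unfolding L'_def by (rule CL_good[OF i dx']) (simp add: xs(2))
  have lL: "length L = i" and lL': "length L' = i" unfolding L_def L'_def by simp_all
  have P': "set ` set L' = (`) \<tau> ` set ` set L" unfolding L'L by (simp add: image_image)
  have UL: "\<Union> (set ` set L) = set xs" unfolding L_def by (rule CL_union[OF i xs(2)])
  have injP: "inj_on ((`) \<tau>) (set ` set L)" using inj UL inj_on_image by metis
  have f': "map ((`) \<tau>) ` coset_list i (cyc_group (std_perm [i])) (map set L) =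
            coset_list i (cyc_group (std_perm [i])) (map set L')"
    using coset_map[OF bnd1[OF i], of "map set L" "(`) \<tau>"] lL unfolding L'L by (simp add: comp_def)
  have g'': "restrict (\<lambda>B. THE l. l \<in> set L' \<and> set l = B) (set ` set L') =
     (\<lambda>B'\<in>(`) \<tau> ` (set ` set L). map \<tau> (restrict (\<lambda>B. THE l. l \<in> set L \<and> set l = B) (set ` set L) (the_inv_into (set ` set L) ((`) \<tau>) B')))"
  proof
    fix B'
    show "restrict (\<lambda>B. THE l. l \<in> set L' \<and> set l = B) (set ` set L') B' =
     (\<lambda>B'\<in>(`) \<tau> ` (set ` set L). map \<tau> (restrict (\<lambda>B. THE l. l \<in> set L \<and> set l = B) (set ` set L) (the_inv_into (set ` set L) ((`) \<tau>) B'))) B'"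
    proof (cases "B' \<in> set ` set L'")
      case True
      then obtain l' where "l' \<in> set L'" "B' = set l'" by blast
      then obtain t where t: "t < i" "B' = set (L' ! t)" using lL' by (metis in_set_conv_nth)
      have Lt': "L' ! t = map \<tau> (L ! t)" using t lL unfolding L'L by simp
      have B'eq: "B' = \<tau> ` set (L ! t)" using t Lt' by simp
      have inP: "set (L ! t) \<in> set ` set L" using t lL by simp
      have inv: "the_inv_into (set ` set L) ((`) \<tau>) B' = set (L ! t)"
        unfolding B'eq by (rule the_inv_into_f_f[OF injP inP])
      have th1: "(THE l. l \<in> set L' \<and> set l = B') = L' ! t" using the_col[OF g' a t(1)] t by simp
      have th2: "(THE l. l \<in> set L \<and> set l = set (L ! t)) = L ! t" using the_col[OF g a t(1)] .
      show ?thesis using True P' inv th1 th2 inP Lt' by simp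
    next
      case False
      then show ?thesis using P' by simp
    qed
  qed
  have "Psi i L' = transp (comp_sp (C_sp [i]) (Xpow a)) \<tau> (Psi i L)"
    unfolding Psi_def comp_transp C_transp Xpow_transp using P' f' g'' by simp
  then show ?thesis unfolding L_def L'_def .
qed

lemma core:
  assumes i: "0 < i" and a: "0 < a"
  shows "species_iso (C_sp (replicate a i) :: ('a, 'a list set) species) (comp_sp (C_sp [i]) (Xpow a))"
proof -
  have e: "(C_sp (replicate a i) :: ('a, 'a list set) species) = quot_sp (a*i) (cyc_group (std_perm (replicate a i)))"
    by (simp add: C_sp_def sum_list_replicate)
  show ?thesis unfolding e
  proof (rule quot_iso[where \<psi> = "\<lambda>xs. Psi i (CL i a xs)"])
    show "\<forall>t<a * i. \<forall>h\<in>cyc_group (std_perm (replicate a i)). h t < a * i" by (rule bounded_C[OF i])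
  next
    fix xs :: "'a list" assume d: "distinct xs" and l: "length xs = a * i"
    show "Psi i (CL i a xs) \<in> struct (comp_sp (C_sp [i]) (Xpow a)) (set xs)"
      using Psi_struct[OF CL_good[OF i d l] a] CL_union[OF i l] by simp
  next
    fix xs ys :: "'a list"
    assume "distinct xs" "length xs = a * i" "distinct ys" "length ys = a * i"
    then show "Psi i (CL i a xs) = Psi i (CL i a ys) \<longleftrightarrow>
      coset_list (a * i) (cyc_group (std_perm (replicate a i))) xs = coset_list (a * i) (cyc_group (std_perm (replicate a i))) ys"
      by (rule core_B[OF i a])
  next
    fix U :: "'a set" and s assume "finite U" "s \<in> struct (comp_sp (C_sp [i]) (Xpow a)) U"
    then show "\<exists>xs. distinct xs \<and> length xs = a * i \<and> set xs = U \<and> Psi i (CL i a xs) = s"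
      using core_C[OF i a] by blast
  next
    fix xs :: "'a list" and \<tau> :: "'a \<Rightarrow> 'a"
    assume "distinct xs" "length xs = a * i" "inj_on \<tau> (set xs)"
    then show "Psi i (CL i a (map \<tau> xs)) = transp (comp_sp (C_sp [i]) (Xpow a)) \<tau> (Psi i (CL i a xs))"
      by (rule core_D[OF i a])
  qed
qed

theorem mainTheorem3:
  fixes ps :: "(nat \<times> nat) list"
  assumes "distinct (map fst ps)"
      and "\<forall>(i, a) \<in> set ps. 0 < i \<and> 0 < a"
  shows "species_iso (K_sp ps :: ('a, _) species)
           (prod_sp (map (\<lambda>(i, a). comp_sp (C_sp [i]) (Xpow a)) ps))"
proof -
  define Fs :: "('a, 'a list set) species list" where "Fs = map (\<lambda>(i, a). C_sp (replicate a i)) ps"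
  define Gs :: "('a, _) species list" where "Gs = map (\<lambda>(i, a). comp_sp (C_sp [i]) (Xpow a)) ps"
  have K: "(K_sp ps :: ('a, _) species) = prod_sp (rev Fs)" unfolding K_sp_def Fs_def by simp
  have "species_iso (prod_sp Fs) (prod_sp Gs)"
  proof (rule prod_iso)
    show "length Fs = length Gs" unfolding Fs_def Gs_def by simp
    show "\<forall>j<length Fs. species_iso (Fs ! j) (Gs ! j)"
    proof (intro allI impI)
      fix j assume "j < length Fs"
      then have j: "j < length ps" unfolding Fs_def by simp
      obtain i a where p: "ps ! j = (i, a)" by (cases "ps ! j") auto
      have "(i, a) \<in> set ps" using j p by (metis nth_mem)
      then have ia: "0 < i" "0 < a" using assms(2) by auto
      have "Fs ! j = C_sp (replicate a i)" "Gs ! j = comp_sp (C_sp [i]) (Xpow a)"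
        unfolding Fs_def Gs_def using j p by simp_all
      then show "species_iso (Fs ! j) (Gs ! j)" using core[OF ia] by simp
    qed
  qed
  then show ?thesis unfolding K using iso_trans[OF rev_iso] unfolding Gs_def by blast
qed


end
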